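(* For every weak independence relation $\diamond$ on the analysis instance $\mathcal{D}$, and every sequence of transformers $\sigma\in\mathrm{runs}(\mathcal{D})$, there is a unique configuration $C$ of $\mathcal{U}_{\mathcal{D},\diamond}$ such that $\sigma\in\mathrm{inter}(C)$.
   Context: An analysis instance $\mathcal{D}=\langle D,\sqsubseteq,F,d_0\rangle$ consists of a lattice $\langle D,\sqsubseteq,\sqcup,\sqcap\rangle$ with least element $\bot$, a set $F$ of monotone, bottom-strict transformers, and an initial element $d_0$. A transformer $f$ is enabled at $d$ if $f(d)\neq\bot$. For $\sigma=f_1\ldots f_m$, $\mathrm{state}(\sigma)=(f_m\circ\cdots\circ f_1)(d_0)$; $\sigma$ is a run if $\mathrm{state}(\sigma)\neq\bot$ and $\mathrm{runs}(\mathcal{D})$ is the set of runs; $\mathrm{reach}(\mathcal{D})$ is the set of reachable elements. A relation $\diamond\subseteq F\times F$ is a weak independence if it is symmetric, irreflexive, and $f\diamond f'$ implies $f(f'(d))=f'(f(d))$ for every $d\in\mathrm{reach}(\mathcal{D})$. A labelled prime event structure (PES) is $\langle E,<,\#,h\rangle$ with $<$ a strict partial order with finite down-sets, $\#$ a symmetric irreflexive conflict relation inherited along $<$, and a labelling $h$. A configuration is a finite causally closed, conflict-free set of events. The interleavings $\mathrm{inter}(C)$ are the label sequences of the linearizations of $C$ respecting $<$. The state of $C$, $\mathrm{state}(C)$, is the greatest lower bound (meet) in $D$ of $\{\mathrm{state}(\sigma)\colon\sigma\in\mathrm{inter}(C)\}$. The unfolding $\mathcal{U}_{\mathcal{D},\diamond}$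 is obtained by starting from the empty PES and repeatedly adding events $e=\langle f,C\rangle$, where $C$ is a configuration, $f$ is enabled at $\mathrm{state}(C)$ and $\neg(f\diamond h(e'))$ for every $<$-maximal $e'\in C$; one sets $e'<e$ for all $e'\in C$, $e'\# e$ for all other events $e'\notin C$ with $\neg(f\diamond h(e'))$, and $h(e)=f$; this is saturated until no new event can be added. *)

theory Defs
  imports Main "HOL-Library.FSet"
begin

definition analysis_instance :: "('d::{lattice,order_bot} \<Rightarrow> 'd) set \<Rightarrow> bool" where
  "analysis_instance F \<longleftrightarrow> (\<forall>f\<in>F. mono f \<and> f bot = bot)"

definition seq_state :: "'d \<Rightarrow> ('d \<Rightarrow> 'd) list \<Rightarrow> 'd" where
  "seq_state d0 \<sigma> = fold (\<lambda>f d. f d) \<sigma> d0"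

definition runs :: "('d::{lattice,order_bot} \<Rightarrow> 'd) set \<Rightarrow> 'd \<Rightarrow> ('d \<Rightarrow> 'd) list set" where
  "runs F d0 = {\<sigma>. \<sigma> \<in> lists F \<and> seq_state d0 \<sigma> \<noteq> bot}"

definition reach :: "('d::{lattice,order_bot} \<Rightarrow> 'd) set \<Rightarrow> 'd \<Rightarrow> 'd set" where
  "reach F d0 = seq_state d0 ` runs F d0"

definition weak_indep ::
  "('d::{lattice,order_bot} \<Rightarrow> 'd) set \<Rightarrow> 'd \<Rightarrow> ('d \<Rightarrow> 'd) rel \<Rightarrow> bool" where
  "weak_indep F d0 I \<longleftrightarrow> I \<subseteq> F \<times> F \<and> sym I \<and> irrefl I \<and>
     (\<forall>(f, g)\<in>I. \<forall>d\<in>reach F d0. f (g d) = g (f d))"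

datatype 'f event = Ev (lbl: 'f) (hist: "'f event fset")

definition causes :: "'f event \<Rightarrow> 'f event \<Rightarrow> bool" where
  "causes e' e \<longleftrightarrow> e' |\<in>| hist e"

text \<open>immediate conflict created when the later of the two events was added\<close>
definition dconfl :: "'f rel \<Rightarrow> 'f event \<Rightarrow> 'f event \<Rightarrow> bool" where
  "dconfl I e e' \<longleftrightarrow> e \<noteq> e' \<and> \<not> causes e e' \<and> \<not> causes e' e \<and> (lbl e, lbl e') \<notin> I"

definition confl :: "'f rel \<Rightarrow> 'f event \<Rightarrow> 'f event \<Rightarrow> bool" where
  "confl I e1 e2 \<longleftrightarrow> (\<exists>a b. (a = e1 \<or> causes a e1) \<and> (b = e2 \<or> causes b e2) \<and> dconfl I a b)"

definition is_config :: "'f rel \<Rightarrow> 'f event set \<Rightarrow> bool" where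
  "is_config I X \<longleftrightarrow> finite X \<and> (\<forall>e\<in>X. \<forall>e'. causes e' e \<longrightarrow> e' \<in> X)
     \<and> (\<forall>e\<in>X. \<forall>e'\<in>X. \<not> confl I e e')"

definition interl :: "'f event set \<Rightarrow> 'f list set" where
  "interl X = {map lbl es | es. distinct es \<and> set es = X \<and>
      (\<forall>i j. i < j \<and> j < length es \<longrightarrow> \<not> causes (es ! j) (es ! i))}"

definition conf_state :: "'d::lattice \<Rightarrow> ('d \<Rightarrow> 'd) event set \<Rightarrow> 'd" where
  "conf_state d0 X = Inf_fin (seq_state d0 ` interl X)"

definition is_maximal :: "'f event \<Rightarrow> 'f event set \<Rightarrow> bool" where
  "is_maximal e X \<longleftrightarrow> e \<in> X \<and> \<not> (\<exists>e''\<in>X. causes e e'')"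

inductive_set unf_events :: "('d::{lattice,order_bot} \<Rightarrow> 'd) set \<Rightarrow> 'd \<Rightarrow> ('d \<Rightarrow> 'd) rel
    \<Rightarrow> ('d \<Rightarrow> 'd) event set"
  for F d0 I where
  add: "\<lbrakk> \<forall>e\<in>fset C. e \<in> unf_events F d0 I; is_config I (fset C); f \<in> F;
          f (conf_state d0 (fset C)) \<noteq> bot;
          \<forall>e'\<in>fset C. is_maximal e' (fset C) \<longrightarrow> (f, lbl e') \<notin> I \<rbrakk>
        \<Longrightarrow> Ev f C \<in> unf_events F d0 I"

definition unf_config :: "('d::{lattice,order_bot} \<Rightarrow> 'd) set \<Rightarrow> 'd \<Rightarrow> ('d \<Rightarrow> 'd) rel
    \<Rightarrow> ('d \<Rightarrow> 'd) event set \<Rightarrow> bool" where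
  "unf_config F d0 I X \<longleftrightarrow> X \<subseteq> unf_events F d0 I \<and> is_config I X"

end

theory Submission
  imports Defs
begin

lemma interl_alt:
  "interl X = {map lbl es | es. distinct es \<and> set es = X \<and> sorted_wrt (\<lambda>a b. \<not> causes b a) es}"
  unfolding interl_def sorted_wrt_iff_nth_less by blast

lemma unf_hist:
  assumes "e \<in> unf_events F d0 I"
  shows "fset (hist e) \<subseteq> unf_events F d0 I \<and> is_config I (fset (hist e)) \<and> lbl e \<in> F
     \<and> (\<forall>e'\<in>fset (hist e). is_maximal e' (fset (hist e)) \<longrightarrow> (lbl e, lbl e') \<notin> I)"
  using assms by cases auto

lemma unf_irrefl:
  assumes "e \<in> unf_events F d0 I"
  shows "\<not> causes e e"
  using assms
proof induction
  case (add C f)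
  show ?case
  proof
    assume "causes (Ev f C) (Ev f C)"
    then have "Ev f C \<in> fset C" by (simp add: causes_def)
    with add.IH show False by (auto simp: causes_def)
  qed
qed

lemma unf_trans:
  assumes "e \<in> unf_events F d0 I" "causes y e" "causes z y"
  shows "causes z e"
  using unf_hist[OF assms(1)] assms(2,3) unfolding is_config_def causes_def by blast

lemma unf_fcard:
  assumes "e \<in> unf_events F d0 I" "causes y e"
  shows "fcard (hist y) < fcard (hist e)"
proof -
  have yP: "y \<in> unf_events F d0 I" using unf_hist[OF assms(1)] assms(2) by (auto simp: causes_def)
  have "hist y |\<subseteq>| hist e" using unf_trans[OF assms(1,2)] by (auto simp: causes_def)
  moreover have "y |\<in>| hist e" using assms(2) by (simp add: causes_def)
  moreover have "y |\<notin>| hist y" using unf_irrefl[OF yP] by (simp add: causes_def)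
  ultimately have "hist y |\<subset>| hist e" by blast
  then show ?thesis by (rule pfsubset_fcard_mono)
qed

lemma unf_maxabove:
  assumes xP: "x \<in> unf_events F d0 I" and w: "w \<in> fset (hist x)"
  shows "\<exists>m. is_maximal m (fset (hist x)) \<and> (w = m \<or> causes w m)"
proof -
  define S where "S = {m \<in> fset (hist x). w = m \<or> causes w m}"
  have fin: "finite S" unfolding S_def by simp
  have ne: "w \<in> S" using w unfolding S_def by simp
  define k where "k = Max ((\<lambda>m. fcard (hist m)) ` S)"
  have "k \<in> (\<lambda>m. fcard (hist m)) ` S" unfolding k_def using fin ne by (intro Max_in) auto
  then obtain m where mS: "m \<in> S" and mk: "fcard (hist m) = k" by auto
  have "is_maximal m (fset (hist x))"
    unfolding is_maximal_def
  proof
    show "m \<in> fset (hist x)" using mS unfolding S_def by simp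
    show "\<not> (\<exists>e''\<in>fset (hist x). causes m e'')"
    proof
      assume "\<exists>e''\<in>fset (hist x). causes m e''"
      then obtain e'' where e1: "e'' \<in> fset (hist x)" and e2: "causes m e''" by blast
      have e''P: "e'' \<in> unf_events F d0 I" using unf_hist[OF xP] e1 by auto
      have "causes w e''"
        using mS e2 unf_trans[OF e''P e2] unfolding S_def by auto
      then have "e'' \<in> S" using e1 unfolding S_def by simp
      then have "fcard (hist e'') \<le> k" unfolding k_def using fin by (intro Max_ge) auto
      moreover have "fcard (hist m) < fcard (hist e'')" by (rule unf_fcard[OF e''P e2])
      ultimately show False using mk by simp
    qed
  qed
  then show ?thesis using mS unfolding S_def by blast
qed

lemma seq_state_append: "seq_state d0 (a @ b) = seq_state (seq_state d0 a) b"
  by (simp add: seq_state_def)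

lemma seq_state_bot:
  assumes "analysis_instance F" "set b \<subseteq> F"
  shows "seq_state bot b = bot"
  using assms(2)
proof (induction b)
  case Nil then show ?case by (simp add: seq_state_def)
next
  case (Cons f b)
  then have "f bot = bot" using assms(1) by (auto simp: analysis_instance_def)
  then show ?case using Cons by (simp add: seq_state_def)
qed

lemma seq_state_prefix:
  assumes "analysis_instance F" "set b \<subseteq> F" "seq_state d0 (a @ b) \<noteq> bot"
  shows "seq_state d0 a \<noteq> bot"
  using assms seq_state_bot seq_state_append by metis

lemma swap_state:
  assumes AI: "analysis_instance F" and WI: "weak_indep F d0 I"
    and fg: "(f, g) \<in> I" and a: "set a \<subseteq> F"
  shows "seq_state d0 (a @ f # g # c) = seq_state d0 (a @ g # f # c)"
proof -
  have fF: "f \<in> F" "g \<in> F" using fg WI by (auto simp: weak_indep_def)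
  define d where "d = seq_state d0 a"
  have "g (f d) = f (g d)"
  proof (cases "d = bot")
    case True
    have "f bot = bot" "g bot = bot" using fF AI by (auto simp: analysis_instance_def)
    then show ?thesis using True by simp
  next
    case False
    then have "a \<in> runs F d0" using a unfolding runs_def d_def by auto
    then have "d \<in> reach F d0" unfolding reach_def d_def by auto
    then show ?thesis using WI fg unfolding weak_indep_def by auto
  qed
  then show ?thesis
    unfolding seq_state_append[of d0 a] d_def[symmetric] by (simp add: seq_state_def)
qed

lemma move_state:
  assumes AI: "analysis_instance F" and WI: "weak_indep F d0 I"
    and "\<forall>z\<in>set b. (x, z) \<in> I" and "set a \<subseteq> F" and "set b \<subseteq> F"
  shows "seq_state d0 (a @ x # b) = seq_state d0 (a @ b @ [x])"
  using assms(3-)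
proof (induction b arbitrary: a)
  case Nil then show ?case by simp
next
  case (Cons z b)
  have "seq_state d0 (a @ x # z # b) = seq_state d0 (a @ z # x # b)"
    by (rule swap_state[OF AI WI]) (use Cons.prems in auto)
  also have "\<dots> = seq_state d0 ((a @ [z]) @ x # b)" by simp
  also have "\<dots> = seq_state d0 ((a @ [z]) @ b @ [x])"
    using Cons by (intro Cons.IH) auto
  finally show ?case by simp
qed

lemma same_state:
  assumes AI: "analysis_instance F" and WI: "weak_indep F d0 I"
    and "lbl ` X \<subseteq> F" and "\<forall>e\<in>X. \<forall>e'\<in>X. \<not> confl I e e'"
    and "distinct es" "set es = X" "sorted_wrt (\<lambda>a b. \<not> causes b a) es"
    and "distinct es'" "set es' = X" "sorted_wrt (\<lambda>a b. \<not> causes b a) es'"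
  shows "seq_state d0 (map lbl es) = seq_state d0 (map lbl es')"
  using assms(3-)
proof (induction es arbitrary: es' X rule: rev_induct)
  case Nil then show ?case by simp
next
  case (snoc x es)
  have "x \<in> set es'" using snoc.prems by auto
  then obtain a b where es': "es' = a @ x # b" by (meson split_list)
  have indep: "\<forall>z\<in>set (map lbl b). (lbl x, z) \<in> I"
  proof
    fix z' assume "z' \<in> set (map lbl b)"
    then obtain z where z: "z \<in> set b" "z' = lbl z" by auto
    have zx: "z \<noteq> x" using snoc.prems(6) es' z by auto
    have "z \<in> X" "x \<in> X" using snoc.prems es' z by auto
    have "\<not> causes z x" using snoc.prems(8) es' z by (simp add: sorted_wrt_append)
    moreover have "\<not> causes x z" using snoc.prems(4,5) es' z zx \<open>z \<in> X\<close>
      by (auto simp: sorted_wrt_append)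
    moreover have "\<not> confl I x z" using snoc.prems(2) \<open>z \<in> X\<close> \<open>x \<in> X\<close> by auto
    ultimately show "(lbl x, z') \<in> I" using zx z unfolding confl_def dconfl_def by blast
  qed
  have "seq_state d0 (map lbl es') = seq_state d0 (map lbl a @ lbl x # map lbl b)"
    using es' by simp
  also have "\<dots> = seq_state d0 (map lbl a @ map lbl b @ [lbl x])"
    using snoc.prems(1,7) es' by (intro move_state[OF AI WI indep]) auto
  also have "\<dots> = seq_state d0 (map lbl (a @ b) @ [lbl x])" by simp
  also have "seq_state d0 (map lbl (a @ b)) = seq_state d0 (map lbl es)"
  proof (rule sym, rule snoc.IH[where X = "X - {x}"])
    show "lbl ` (X - {x}) \<subseteq> F" using snoc.prems(1) by auto
    show "\<forall>e\<in>X - {x}. \<forall>e'\<in>X - {x}. \<not> confl I e e'" using snoc.prems(2) by auto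
    show "distinct es" "set es = X - {x}" using snoc.prems(3,4) by auto
    show "sorted_wrt (\<lambda>a b. \<not> causes b a) es" using snoc.prems(5) by (simp add: sorted_wrt_append)
    show "distinct (a @ b)" "set (a @ b) = X - {x}" using snoc.prems(6,7) es' by auto
    show "sorted_wrt (\<lambda>a b. \<not> causes b a) (a @ b)" using snoc.prems(8) es'
      by (simp add: sorted_wrt_append)
  qed
  then have "seq_state d0 (map lbl (a @ b) @ [lbl x]) = seq_state d0 (map lbl (es @ [x]))"
    by (simp add: seq_state_append)
  finally show ?case by simp
qed

lemma conf_state_lin:
  assumes AI: "analysis_instance F" and WI: "weak_indep F d0 I"
    and "lbl ` X \<subseteq> F" and "\<forall>e\<in>X. \<forall>e'\<in>X. \<not> confl I e e'"
    and "distinct es" "set es = X" "sorted_wrt (\<lambda>a b. \<not> causes b a) es"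
  shows "conf_state d0 X = seq_state d0 (map lbl es)"
proof -
  have "seq_state d0 ` interl X = {seq_state d0 (map lbl es)}"
  proof
    show "seq_state d0 ` interl X \<subseteq> {seq_state d0 (map lbl es)}"
    proof
      fix v assume "v \<in> seq_state d0 ` interl X"
      then obtain es' where es': "v = seq_state d0 (map lbl es')" "distinct es'" "set es' = X"
        "sorted_wrt (\<lambda>a b. \<not> causes b a) es'" unfolding interl_alt by blast
      have "seq_state d0 (map lbl es') = seq_state d0 (map lbl es)"
        by (rule same_state[OF AI WI assms(3,4) es'(2-4) assms(5-7)])
      then show "v \<in> {seq_state d0 (map lbl es)}" using es'(1) by simp
    qed
    show "{seq_state d0 (map lbl es)} \<subseteq> seq_state d0 ` interl X"
      using assms(5-7) unfolding interl_alt by blast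
  qed
  then show ?thesis unfolding conf_state_def by simp
qed

lemma config_causes:
  assumes "is_config I X" "e \<in> X" "causes e' e" shows "e' \<in> X"
  using assms unfolding is_config_def by blast

lemma hist_char:
  assumes IS: "sym I" and xP: "x \<in> unf_events F d0 I" and XP: "X \<subseteq> unf_events F d0 I"
    and XC: "is_config I X" and xX: "x \<in> X" and mx: "\<forall>z\<in>X. \<not> causes x z"
  shows "fset (hist x) = {w \<in> X - {x}. \<exists>d\<in>X - {x}. (lbl x, lbl d) \<notin> I \<and> (w = d \<or> causes w d)}"
proof
  show "fset (hist x) \<subseteq> {w \<in> X - {x}. \<exists>d\<in>X - {x}. (lbl x, lbl d) \<notin> I \<and> (w = d \<or> causes w d)}"
  proof
    fix w assume w: "w \<in> fset (hist x)"
    have wX: "w \<in> X - {x}" using w xX XC unf_irrefl[OF xP]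
      by (auto simp: is_config_def causes_def)
    obtain m where m: "is_maximal m (fset (hist x))" "w = m \<or> causes w m"
      using unf_maxabove[OF xP w] by blast
    have "(lbl x, lbl m) \<notin> I" using unf_hist[OF xP] m(1) by (auto simp: is_maximal_def)
    moreover have "m \<in> X - {x}" using m(1) xX XC unf_irrefl[OF xP]
      by (auto simp: is_config_def causes_def is_maximal_def)
    ultimately show "w \<in> {w \<in> X - {x}. \<exists>d\<in>X - {x}. (lbl x, lbl d) \<notin> I \<and> (w = d \<or> causes w d)}"
      using wX m(2) by blast
  qed
  show "{w \<in> X - {x}. \<exists>d\<in>X - {x}. (lbl x, lbl d) \<notin> I \<and> (w = d \<or> causes w d)} \<subseteq> fset (hist x)"
  proof
    fix w assume "w \<in> {w \<in> X - {x}. \<exists>d\<in>X - {x}. (lbl x, lbl d) \<notin> I \<and> (w = d \<or> causes w d)}"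
    then obtain d where d: "d \<in> X - {x}" "(lbl x, lbl d) \<notin> I" "w = d \<or> causes w d" by blast
    have "causes d x"
    proof (rule ccontr)
      assume nc: "\<not> causes d x"
      have "(lbl d, lbl x) \<notin> I" using d(2) IS by (auto dest: symD)
      then have "dconfl I d x" using nc d(1) mx unfolding dconfl_def by auto
      then have "confl I d x" unfolding confl_def by blast
      then show False using XC d(1) xX unfolding is_config_def by blast
    qed
    then show "w \<in> fset (hist x)" using d(3) unf_trans[OF xP] by (auto simp: causes_def)
  qed
qed

lemma unique_conf:
  assumes IS: "sym I"
    and "X \<subseteq> unf_events F d0 I" "is_config I X" "\<sigma> \<in> interl X"
    and "Y \<subseteq> unf_events F d0 I" "is_config I Y" "\<sigma> \<in> interl Y"
  shows "X = Y"
  using assms(2-)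
proof (induction \<sigma> arbitrary: X Y rule: rev_induct)
  case Nil then show ?case unfolding interl_alt by auto
next
  case (snoc f \<sigma>)
  have step: "\<exists>x. x \<in> Z \<and> lbl x = f \<and> x \<in> unf_events F d0 I \<and> (\<forall>z\<in>Z. \<not> causes x z) \<and>
     Z - {x} \<subseteq> unf_events F d0 I \<and> is_config I (Z - {x}) \<and> \<sigma> \<in> interl (Z - {x})"
    if Z: "Z \<subseteq> unf_events F d0 I" "is_config I Z" "\<sigma> @ [f] \<in> interl Z" for Z
  proof -
    obtain es where es: "map lbl es = \<sigma> @ [f]" "distinct es" "set es = Z"
      "sorted_wrt (\<lambda>a b. \<not> causes b a) es" using Z(3) unfolding interl_alt by auto
    then obtain es0 x where esx: "es = es0 @ [x]"
      by (metis map_is_Nil_conv rev_exhaust snoc_eq_iff_butlast)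
    have xP: "x \<in> unf_events F d0 I" using Z(1) es(3) esx by auto
    have mx: "\<forall>z\<in>Z. \<not> causes x z"
      using es(3,4) esx unf_irrefl[OF xP] by (auto simp: sorted_wrt_append)
    have Z': "Z - {x} = set es0" using es(2,3) esx by auto
    have cfg: "is_config I (Z - {x})"
      unfolding is_config_def
    proof (intro conjI ballI allI impI)
      show "finite (Z - {x})" using Z' by simp
    next
      fix e e' assume "e \<in> Z - {x}" "causes e' e"
      then show "e' \<in> Z - {x}" using Z(2) mx unfolding is_config_def by blast
    next
      fix e e' assume "e \<in> Z - {x}" "e' \<in> Z - {x}"
      then show "\<not> confl I e e'" using Z(2) unfolding is_config_def by blast
    qed
    have "\<sigma> \<in> interl (Z - {x})"
      unfolding interl_alt using es esx Z' by (auto simp: sorted_wrt_append)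
    then show ?thesis using xP mx cfg Z(1) es(1,3) esx by auto
  qed
  obtain x where x: "x \<in> X" "lbl x = f" "x \<in> unf_events F d0 I" "\<forall>z\<in>X. \<not> causes x z"
    "X - {x} \<subseteq> unf_events F d0 I" "is_config I (X - {x})" "\<sigma> \<in> interl (X - {x})"
    using step[OF snoc.prems(1-3)] by blast
  obtain y where y: "y \<in> Y" "lbl y = f" "y \<in> unf_events F d0 I" "\<forall>z\<in>Y. \<not> causes y z"
    "Y - {y} \<subseteq> unf_events F d0 I" "is_config I (Y - {y})" "\<sigma> \<in> interl (Y - {y})"
    using step[OF snoc.prems(4-6)] by blast
  have eq: "X - {x} = Y - {y}" using snoc.IH[OF x(5-7) y(5-7)] .
  have "fset (hist x) = fset (hist y)"
    using hist_char[OF IS x(3) snoc.prems(1,2) x(1,4)] hist_char[OF IS y(3) snoc.prems(4,5) y(1,4)]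
      eq x(2) y(2) by simp
  then have "x = y" by (metis event.collapse fset_inject x(2) y(2))
  then show ?case using eq x(1) y(1) by blast
qed

lemma exists_conf:
  assumes AI: "analysis_instance F" and WI: "weak_indep F d0 I"
  shows "\<sigma> \<in> runs F d0 \<Longrightarrow> \<exists>X. X \<subseteq> unf_events F d0 I \<and> is_config I X \<and> \<sigma> \<in> interl X"
proof (induction \<sigma> rule: rev_induct)
  case Nil
  have "[] \<in> interl {}" unfolding interl_alt by auto
  moreover have "is_config I {}" unfolding is_config_def by auto
  ultimately show ?case by blast
next
  case (snoc f \<sigma>)
  let ?P = "unf_events F d0 I"
  have fF: "f \<in> F" and \<sigma>F: "set \<sigma> \<subseteq> F" using snoc.prems unfolding runs_def by auto
  have "seq_state d0 \<sigma> \<noteq> bot"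
    using seq_state_prefix[OF AI, of "[f]" d0 \<sigma>] snoc.prems fF unfolding runs_def by auto
  then have "\<sigma> \<in> runs F d0" using \<sigma>F unfolding runs_def by auto
  then obtain X' where X': "X' \<subseteq> ?P" "is_config I X'" "\<sigma> \<in> interl X'" using snoc.IH by blast
  then obtain es' where es': "\<sigma> = map lbl es'" "distinct es'" "set es' = X'"
    "sorted_wrt (\<lambda>a b. \<not> causes b a) es'" unfolding interl_alt by auto
  have lblF: "lbl ` X' \<subseteq> F" using X'(1) unf_hist by blast
  have cf: "\<forall>e\<in>X'. \<forall>e'\<in>X'. \<not> confl I e e'" using X'(2) unfolding is_config_def by blast
  define C where "C = {y \<in> X'. \<exists>d\<in>X'. (f, lbl d) \<notin> I \<and> (y = d \<or> causes y d)}"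
  have CX: "C \<subseteq> X'" unfolding C_def by auto
  have finC: "finite C" using CX X'(2) unfolding is_config_def by (auto intro: finite_subset)
  have Cdown: "\<And>y z. y \<in> C \<Longrightarrow> causes z y \<Longrightarrow> z \<in> C"
  proof -
    fix y z assume y: "y \<in> C" and zy: "causes z y"
    then obtain d where d: "d \<in> X'" "(f, lbl d) \<notin> I" "y = d \<or> causes y d" unfolding C_def by auto
    have "z \<in> X'" using config_causes[OF X'(2) _ zy] y CX by auto
    moreover have "causes z d" using d zy unf_trans[of d F d0 I y z] X'(1) by auto
    ultimately show "z \<in> C" unfolding C_def using d by blast
  qed
  have Cdep: "\<And>d. d \<in> X' \<Longrightarrow> (f, lbl d) \<notin> I \<Longrightarrow> d \<in> C" unfolding C_def by blast
  obtain C' where C': "fset C' = C" using finC by (metis Abs_fset_inverse mem_Collect_eq)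
  define e where "e = Ev f C'"
  have Ccfg: "is_config I C" unfolding is_config_def using finC Cdown cf CX by blast
  have Cmax: "\<forall>e'\<in>C. is_maximal e' C \<longrightarrow> (f, lbl e') \<notin> I"
  proof (intro ballI impI)
    fix e' assume "e' \<in> C" "is_maximal e' C"
    then obtain d where d: "d \<in> X'" "(f, lbl d) \<notin> I" "e' = d \<or> causes e' d" unfolding C_def by auto
    have "d \<in> C" using Cdep d by blast
    then show "(f, lbl e') \<notin> I" using d \<open>is_maximal e' C\<close> unfolding is_maximal_def by auto
  qed
  define ec where "ec = filter (\<lambda>x. x \<in> C) es'"
  define er where "er = filter (\<lambda>x. x \<notin> C) es'"
  have ecl: "distinct ec" "set ec = C" "sorted_wrt (\<lambda>a b. \<not> causes b a) ec"
    unfolding ec_def using es' CX by (auto intro: sorted_wrt_filter)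
  have erl: "distinct (ec @ er)" "set (ec @ er) = X'" "sorted_wrt (\<lambda>a b. \<not> causes b a) (ec @ er)"
  proof -
    show "distinct (ec @ er)" "set (ec @ er) = X'" unfolding ec_def er_def using es' by auto
    have "sorted_wrt (\<lambda>a b. \<not> causes b a) er" unfolding er_def using es' by (auto intro: sorted_wrt_filter)
    moreover have "\<forall>x\<in>set ec. \<forall>y\<in>set er. \<not> causes y x"
      unfolding er_def using ecl(2) Cdown by auto
    ultimately show "sorted_wrt (\<lambda>a b. \<not> causes b a) (ec @ er)" using ecl(3)
      by (simp add: sorted_wrt_append)
  qed
  have st: "seq_state d0 (map lbl es') = seq_state d0 (map lbl (ec @ er))"
    by (rule same_state[OF AI WI lblF cf es'(2-4) erl])
  have "seq_state d0 (map lbl (ec @ er) @ [f]) \<noteq> bot"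
    using snoc.prems st es'(1) unfolding runs_def by (simp add: seq_state_append)
  moreover have "seq_state d0 (map lbl ec @ f # map lbl er) = seq_state d0 (map lbl ec @ map lbl er @ [f])"
  proof (rule move_state[OF AI WI])
    show "\<forall>z\<in>set (map lbl er). (f, z) \<in> I" unfolding er_def using es'(3) Cdep by auto
    show "set (map lbl ec) \<subseteq> F" "set (map lbl er) \<subseteq> F"
      unfolding ec_def er_def using es'(3) lblF by auto
  qed
  ultimately have "seq_state d0 ((map lbl ec @ [f]) @ map lbl er) \<noteq> bot" by simp
  then have "seq_state d0 (map lbl ec @ [f]) \<noteq> bot"
    by (rule seq_state_prefix[OF AI, rotated]) (use lblF es'(3) er_def in auto)
  moreover have "conf_state d0 C = seq_state d0 (map lbl ec)"
    using conf_state_lin[OF AI WI _ _ ecl] lblF CX cf by blast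
  ultimately have en: "f (conf_state d0 (fset C')) \<noteq> bot" using C' by (simp add: seq_state_append seq_state_def)
  have eP: "e \<in> ?P" unfolding e_def
    by (rule unf_events.add) (use C' CX X'(1) Ccfg fF en Cmax in auto)
  have histe: "fset (hist e) = C" unfolding e_def using C' by simp
  have irrI: "(f, f) \<notin> I" using WI unfolding weak_indep_def irrefl_def by auto
  have eX': "e \<notin> X'"
  proof
    assume "e \<in> X'"
    then have "e \<in> C" using Cdep irrI unfolding e_def by auto
    then have "causes e e" using histe unfolding causes_def by simp
    then show False using unf_irrefl[OF eP] by simp
  qed
  define X where "X = insert e X'"
  have below: "\<And>p a. p \<in> X \<Longrightarrow> a = p \<or> causes a p \<Longrightarrow> a \<in> X"
    using config_causes[OF X'(2)] histe CX unfolding X_def causes_def by auto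
  have IS: "sym I" using WI unfolding weak_indep_def by auto
  have nodc: "\<not> dconfl I a b" if ab: "a \<in> X" "b \<in> X" for a b
  proof
    assume dc: "dconfl I a b"
    consider "a \<in> X'" "b \<in> X'" | "a = e" "b \<in> X'" | "a \<in> X'" "b = e" | "a = e" "b = e"
      using ab unfolding X_def by auto
    then show False
    proof cases
      case 1
      then have "confl I a b" using dc unfolding confl_def by blast
      then show False using cf 1 by blast
    next
      case 2
      then have "b \<in> C" using dc Cdep unfolding dconfl_def e_def by auto
      then show False using dc 2 histe unfolding dconfl_def causes_def by auto
    next
      case 3
      then have "(lbl b, lbl a) \<notin> I" using dc IS unfolding dconfl_def by (auto dest: symD)
      then have "a \<in> C" using 3 Cdep unfolding e_def by auto
      then show False using dc 3 histe unfolding dconfl_def causes_def by auto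
    next
      case 4 then show False using dc unfolding dconfl_def by auto
    qed
  qed
  have Xcfg: "is_config I X"
    unfolding is_config_def
  proof (intro conjI ballI allI impI)
    show "finite X" using X'(2) unfolding X_def is_config_def by auto
  next
    fix p q assume "p \<in> X" "causes q p" then show "q \<in> X" using below by blast
  next
    fix p q assume pq: "p \<in> X" "q \<in> X"
    show "\<not> confl I p q"
      unfolding confl_def using below[OF pq(1)] below[OF pq(2)] nodc by blast
  qed
  have "\<sigma> @ [f] \<in> interl X"
  proof -
    have "\<forall>x\<in>set es'. \<not> causes e x"
      using es'(3) eX' config_causes[OF X'(2)] by blast
    then have "distinct (es' @ [e]) \<and> set (es' @ [e]) = X \<and> sorted_wrt (\<lambda>a b. \<not> causes b a) (es' @ [e])"
      using es' eX' unfolding X_def by (auto simp: sorted_wrt_append)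
    moreover have "\<sigma> @ [f] = map lbl (es' @ [e])" using es'(1) unfolding e_def by simp
    ultimately show ?thesis unfolding interl_alt by blast
  qed
  moreover have "X \<subseteq> ?P" using X'(1) eP unfolding X_def by auto
  ultimately show ?case using Xcfg by blast
qed

theorem theorem2:
  fixes F :: "('d::{lattice,order_bot} \<Rightarrow> 'd) set" and d0 :: 'd
    and I :: "('d \<Rightarrow> 'd) rel" and \<sigma> :: "('d \<Rightarrow> 'd) list"
  assumes "analysis_instance F"
    and "weak_indep F d0 I"
    and "\<sigma> \<in> runs F d0"
  shows "\<exists>!X. unf_config F d0 I X \<and> \<sigma> \<in> interl X"
proof -
  have IS: "sym I" using assms(2) unfolding weak_indep_def by auto
  obtain X where "X \<subseteq> unf_events F d0 I" "is_config I X" "\<sigma> \<in> interl X"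
    using exists_conf[OF assms] by blast
  then show ?thesis
    unfolding unf_config_def using unique_conf[OF IS] by blast
qed

end
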